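(* Let $C=U_d\cdots U_1$ be a Clifford circuit of depth $d$ on $n$ qubits and $\tilde{\mathcal C}=\mathcal E^{\otimes n}\circ\mathcal U_d\circ\mathcal E^{\otimes n}\circ\cdots\circ\mathcal U_1\circ\mathcal E^{\otimes n}$ its noisy implementation, with $\mathcal U_t(\cdot)=U_t(\cdot)U_t^\dagger$ and $\mathcal E(\sigma)=(1-\gamma)\sigma+\gamma\frac I2\operatorname{Tr}(\sigma)$. For $y\in\{0,1\}^n$ let $p_{\tilde{\mathcal C},y}(x)=\operatorname{Tr}(F_x\tilde{\mathcal C}(\lvert y\rangle\langle y\rvert))$, where $F_x=U^\dagger\lvert x\rangle\langle x\rvert U$ for an arbitrary fixed measurement basis given by a unitary $U$. Then when $d\ge O(\gamma^{-1}\log n)$, $$\mathbb E_{y\sim\{0,1\}^n}\sum_{x\in\{0,1\}^n}p_{\tilde{\mathcal C},y}(x)^2=\frac{O(1)}{2^n},$$ where $y$ is uniformly distributed.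
   Context: The Clifford group consists of unitaries mapping Pauli operators to Pauli operators under conjugation. *)

theory Defs
  imports Complex_Main "Jordan_Normal_Form.Matrix"
begin

text \<open>n-qubit operators are complex 2^n x 2^n matrices. A basis index r < 2^n
  encodes the bit string (bit 0 r, ..., bit (n-1) r); qubit k is bit k.\<close>

definition qbit :: "nat \<Rightarrow> nat \<Rightarrow> nat" where
  "qbit k r = (r div 2 ^ k) mod 2"

definition set_qbit :: "nat \<Rightarrow> nat \<Rightarrow> nat \<Rightarrow> nat" where
  "set_qbit k r b = r - qbit k r * 2 ^ k + b * 2 ^ k"

definition dagger :: "complex mat \<Rightarrow> complex mat" where
  "dagger A = mat (dim_col A) (dim_row A) (\<lambda>(i, j). cnj (A $$ (j, i)))"

definition unitary_op :: "nat \<Rightarrow> complex mat \<Rightarrow> bool" where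
  "unitary_op N V \<longleftrightarrow> V \<in> carrier_mat N N \<and> V * dagger V = 1\<^sub>m N \<and> dagger V * V = 1\<^sub>m N"

text \<open>Single-qubit Paulis: index 0 = I, 1 = X, 2 = Y, 3 = Z; entry (a,b).\<close>
definition pauli1 :: "nat \<Rightarrow> nat \<Rightarrow> nat \<Rightarrow> complex" where
  "pauli1 p a b =
     (if p = 0 then (if a = b then 1 else 0)
      else if p = 1 then (if a \<noteq> b then 1 else 0)
      else if p = 2 then (if a = 0 \<and> b = 1 then - \<i> else if a = 1 \<and> b = 0 then \<i> else 0)
      else (if a = b then (if a = 0 then 1 else -1) else 0))"

definition pauli_string :: "nat \<Rightarrow> (nat \<Rightarrow> nat) \<Rightarrow> complex mat" where
  "pauli_string n s = mat (2 ^ n) (2 ^ n)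
     (\<lambda>(r, c). \<Prod>k<n. pauli1 (s k) (qbit k r) (qbit k c))"

definition pauli_group :: "nat \<Rightarrow> complex mat set" where
  "pauli_group n = {ph \<cdot>\<^sub>m pauli_string n s | ph s.
      ph \<in> {1, -1, \<i>, -\<i>} \<and> (\<forall>k<n. s k < 4)}"

definition clifford :: "nat \<Rightarrow> complex mat \<Rightarrow> bool" where
  "clifford n V \<longleftrightarrow> unitary_op (2 ^ n) V \<and>
     (\<forall>P \<in> pauli_group n. V * P * dagger V \<in> pauli_group n)"

text \<open>Single-qubit depolarizing channel E(s) = (1-g) s + g (I/2) Tr(s) applied to qubit k
  of a 2^n x 2^n operator (i.e. id (x) E (x) id).\<close>
definition depol_qubit :: "real \<Rightarrow> nat \<Rightarrow> nat \<Rightarrow> complex mat \<Rightarrow> complex mat" where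
  "depol_qubit g n k \<rho> = mat (2 ^ n) (2 ^ n) (\<lambda>(r, c).
      complex_of_real (1 - g) * \<rho> $$ (r, c)
      + (if qbit k r = qbit k c
         then complex_of_real (g / 2) *
              (\<Sum>b\<in>{0, 1::nat}. \<rho> $$ (set_qbit k r b, set_qbit k c b))
         else 0))"

text \<open>E^{\<otimes> m} on the first m qubits (composition of commuting single-qubit channels);
  the full channel E^{\<otimes> n} is depol_all g n n.\<close>
fun depol_all :: "real \<Rightarrow> nat \<Rightarrow> nat \<Rightarrow> complex mat \<Rightarrow> complex mat" where
  "depol_all g n 0 \<rho> = \<rho>"
| "depol_all g n (Suc k) \<rho> = depol_qubit g n k (depol_all g n k \<rho>)"

text \<open>Noisy circuit: layer t+1 is the unitary Us t.
  noisy_circuit g n Us d = E^n o U_d o E^n o ... o U_1 o E^n.\<close>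
fun noisy_circuit :: "real \<Rightarrow> nat \<Rightarrow> (nat \<Rightarrow> complex mat) \<Rightarrow> nat \<Rightarrow> complex mat \<Rightarrow> complex mat" where
  "noisy_circuit g n Us 0 \<rho> = depol_all g n n \<rho>"
| "noisy_circuit g n Us (Suc t) \<rho> =
     depol_all g n n (Us t * noisy_circuit g n Us t \<rho> * dagger (Us t))"

definition ketbra :: "nat \<Rightarrow> nat \<Rightarrow> complex mat" where
  "ketbra n x = mat (2 ^ n) (2 ^ n) (\<lambda>(r, c). if r = x \<and> c = x then 1 else 0)"

definition mtrace :: "complex mat \<Rightarrow> complex" where
  "mtrace A = (\<Sum>i<dim_row A. A $$ (i, i))"

definition out_prob :: "real \<Rightarrow> nat \<Rightarrow> (nat \<Rightarrow> complex mat) \<Rightarrow> nat \<Rightarrow> complex mat \<Rightarrow> nat \<Rightarrow> nat \<Rightarrow> real" where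
  "out_prob g n Us d U y x =
     Re (mtrace (dagger U * ketbra n x * U * noisy_circuit g n Us d (ketbra n y)))"

end

theory Submission
  imports Defs "HOL-Analysis.Convex"
begin

lemma qbit_lt2: "qbit k r < 2" by (simp add: qbit_def)
lemma qbit_01: "qbit k r = 0 \<or> qbit k r = 1" using qbit_lt2[of k r] by linarith

lemma div_split_aux:
  fixes m l :: nat
  assumes "l < 2 ^ k"
  shows "qbit j (m * 2 ^ k + l) = (if j < k then qbit j l else qbit (j - k) m)"
proof (cases "j < k")
  case True
  have e: "(2::nat) ^ k = 2 ^ j * 2 ^ (k - j)" using True by (simp flip: power_add)
  have "(m * 2 ^ k + l) div 2 ^ j = (l + m * 2 ^ (k - j) * 2 ^ j) div 2 ^ j"
    by (simp add: e algebra_simps)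
  also have "\<dots> = l div 2 ^ j + m * 2 ^ (k - j)" by simp
  finally have "(m * 2 ^ k + l) div 2 ^ j = m * 2 ^ (k - j) + l div 2 ^ j" by simp
  moreover have "even (m * 2 ^ (k - j))" using True by simp
  then obtain q where "m * 2 ^ (k - j) = 2 * q" by blast
  ultimately show ?thesis using True by (simp add: qbit_def)
next
  case False
  have e: "(2::nat) ^ j = 2 ^ k * 2 ^ (j - k)" using False by (simp flip: power_add)
  have "(m * 2 ^ k + l) div 2 ^ j = ((m * 2 ^ k + l) div 2 ^ k) div 2 ^ (j - k)"
    by (simp add: e div_mult2_eq)
  also have "(m * 2 ^ k + l) div 2 ^ k = m" using assms by simp
  finally show ?thesis using False by (simp add: qbit_def)
qed

lemma qbit_decomp: "r = (r div 2 ^ Suc k * 2 + qbit k r) * 2 ^ k + r mod 2 ^ k"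
proof -
  have "r = r div 2 ^ k * 2 ^ k + r mod 2 ^ k" by (metis div_mult_mod_eq)
  moreover have "r div 2 ^ k = r div 2 ^ Suc k * 2 + qbit k r"
  proof -
    have "r div 2 ^ Suc k = r div 2 ^ k div 2" by (metis div_mult2_eq power_Suc2)
    then show ?thesis unfolding qbit_def using div_mult_mod_eq[of "r div 2^k" 2] by simp
  qed
  ultimately show ?thesis by metis
qed

lemma set_qbit_eq: "set_qbit k r b = (r div 2 ^ Suc k * 2 + b) * 2 ^ k + r mod 2 ^ k"
proof -
  define X where "X = r div 2 ^ Suc k * 2 * 2 ^ k"
  define Y where "Y = qbit k r * 2 ^ k"
  define l where "l = r mod 2 ^ k"
  have h: "r = X + Y + l" unfolding X_def Y_def l_def using qbit_decomp[of r k] by (simp add: distrib_right)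
  have "set_qbit k r b = r - Y + b * 2 ^ k" unfolding set_qbit_def Y_def by simp
  also have "\<dots> = X + b * 2 ^ k + l" using h by linarith
  also have "\<dots> = (r div 2 ^ Suc k * 2 + b) * 2 ^ k + r mod 2 ^ k" unfolding X_def l_def by (simp add: distrib_right)
  finally show ?thesis .
qed

lemma qbit_set_qbit:
  assumes "b < 2"
  shows "qbit j (set_qbit k r b) = (if j = k then b else qbit j r)"
proof -
  have l: "r mod 2 ^ k < 2 ^ k" by simp
  have A: "qbit j (set_qbit k r b) = (if j < k then qbit j (r mod 2 ^ k) else qbit (j - k) (r div 2 ^ Suc k * 2 + b))"
    unfolding set_qbit_eq using div_split_aux[OF l] by simp
  have B: "qbit j r = (if j < k then qbit j (r mod 2 ^ k) else qbit (j - k) (r div 2 ^ Suc k * 2 + qbit k r))"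
    using div_split_aux[OF l, of j "r div 2 ^ Suc k * 2 + qbit k r"] qbit_decomp[of r k] by simp
  have C: "qbit i (q * 2 + c) = (if i = 0 then c else qbit (i - 1) q)" if "c < 2" for i q c :: nat
    using div_split_aux[of c 1 i q] that by (cases i) (auto simp: qbit_def)
  show ?thesis
  proof (cases "j < k")
    case True then show ?thesis using A B by simp
  next
    case False
    then show ?thesis using A B C[OF assms] C[OF qbit_lt2] by auto
  qed
qed

lemma set_qbit_lt:
  assumes "k < n" "r < 2 ^ n" "b < 2"
  shows "set_qbit k r b < 2 ^ n"
proof -
  have "Suc k + (n - Suc k) = n" using assms by simp
  then have e: "(2::nat) ^ n = 2 ^ Suc k * 2 ^ (n - Suc k)" by (metis power_add)
  have q: "r div 2 ^ Suc k < 2 ^ (n - Suc k)" using assms(2) e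
    by (simp add: div_less_iff_less_mult mult.commute)
  have "r div 2 ^ Suc k * 2 + b \<le> 2 ^ (n - k) - 1"
  proof -
    have "2 ^ (n - k) = 2 * (2::nat) ^ (n - Suc k)" using assms(1)
      by (metis Suc_diff_Suc power_Suc)
    then show ?thesis using q assms(3) by linarith
  qed
  then have "(r div 2 ^ Suc k * 2 + b) * 2 ^ k \<le> (2 ^ (n - k) - 1) * 2 ^ k" by simp
  moreover have "r mod 2 ^ k < 2 ^ k" by simp
  moreover have "(2 ^ (n - k) - 1) * 2 ^ k + 2 ^ k = (2::nat) ^ n"
    using assms(1) by (simp add: algebra_simps flip: power_add)
  ultimately show ?thesis unfolding set_qbit_eq by linarith
qed

lemma sum_split_pow2:
  fixes F :: "nat \<Rightarrow> 'a::comm_monoid_add"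
  shows "(\<Sum>r<2^Suc n. F r) = (\<Sum>r<2^n. F r) + (\<Sum>r<2^n. F (r + 2^n))"
proof -
  have e: "(2::nat)^Suc n = 2^n + 2^n" by simp
  have "(\<Sum>r<2^Suc n. F r) = (\<Sum>r\<in>{0..<2^n}. F r) + (\<Sum>r\<in>{2^n..<2^n+2^n}. F r)"
    unfolding e atLeast0LessThan[symmetric] by (rule sum.atLeastLessThan_concat[symmetric]) auto
  also have "(\<Sum>r\<in>{2^n..<2^n+2^n}. F r) = (\<Sum>r\<in>{0..<2^n}. F (r + 2^n))"
    using sum.shift_bounds_nat_ivl[of F 0 "2^n" "2^n"] by simp
  finally show ?thesis by (simp add: atLeast0LessThan)
qed

lemma bit_factor:
  fixes f :: "nat \<Rightarrow> nat \<Rightarrow> 'a::comm_semiring_1"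
  shows "(\<Sum>r<2 ^ n. \<Prod>k<n. f k (qbit k r)) = (\<Prod>k<n. f k 0 + f k 1)"
proof (induction n)
  case 0 then show ?case by simp
next
  case (Suc n)
  have q0: "qbit n r = 0" if "r < 2 ^ n" for r :: nat
    using that by (simp add: qbit_def)
  have q1: "qbit k (r + 2 ^ n) = qbit k r" if "r < 2 ^ n" "k < n" for k r :: nat
    using div_split_aux[OF that(1), of k 1] that by (simp add: add.commute)
  have q2: "qbit n (r + 2 ^ n) = 1" if "r < 2 ^ n" for r :: nat
    using div_split_aux[OF that(1), of n 1] by (simp add: add.commute qbit_def)
  have "(\<Sum>r<2 ^ Suc n. \<Prod>k<Suc n. f k (qbit k r))
      = (\<Sum>r<2 ^ n. \<Prod>k<Suc n. f k (qbit k r)) + (\<Sum>r<2 ^ n. \<Prod>k<Suc n. f k (qbit k (r + 2 ^ n)))"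
    by (rule sum_split_pow2)
  also have "(\<Sum>r<2 ^ n. \<Prod>k<Suc n. f k (qbit k r)) = (\<Sum>r<2 ^ n. (\<Prod>k<n. f k (qbit k r)) * f n 0)"
    by (intro sum.cong refl) (simp add: q0)
  also have "(\<Sum>r<2 ^ n. \<Prod>k<Suc n. f k (qbit k (r + 2 ^ n))) = (\<Sum>r<2 ^ n. (\<Prod>k<n. f k (qbit k r)) * f n 1)"
  proof (intro sum.cong refl)
    fix r :: nat assume r: "r \<in> {..<2^n}"
    have "(\<Prod>k<n. f k (qbit k (r + 2 ^ n))) = (\<Prod>k<n. f k (qbit k r))"
      using r by (intro prod.cong refl) (simp add: q1)
    then show "(\<Prod>k<Suc n. f k (qbit k (r + 2 ^ n))) = (\<Prod>k<n. f k (qbit k r)) * f n 1"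
      using r q2 by simp
  qed
  also have "(\<Sum>r<2 ^ n. (\<Prod>k<n. f k (qbit k r)) * f n 0) + (\<Sum>r<2 ^ n. (\<Prod>k<n. f k (qbit k r)) * f n 1)
     = (\<Sum>r<2 ^ n. \<Prod>k<n. f k (qbit k r)) * (f n 0 + f n 1)"
    by (simp only: sum_distrib_right[symmetric] distrib_left)
  finally show ?case using Suc.IH by simp
qed

lemma qbit_mod: "k < n \<Longrightarrow> qbit k (x mod 2^n) = qbit k x"
  using div_split_aux[of "x mod 2^n" n k "x div 2^n"] by (simp add: div_mult_mod_eq)

lemma bits_eq:
  assumes "r < 2 ^ n" "y < 2 ^ n" "\<forall>k<n. qbit k r = qbit k y"
  shows "r = y"
  using assms
proof (induction n arbitrary: r y)
  case 0 then show ?case by simp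
next
  case (Suc n)
  have "r mod 2 ^ n = y mod 2 ^ n"
    by (rule Suc.IH) (use Suc.prems(3) qbit_mod in auto)
  moreover have "r div 2 ^ n = y div 2 ^ n"
  proof -
    have "r div 2 ^ n < 2" "y div 2 ^ n < 2" using Suc.prems(1,2)
      by (simp_all add: less_mult_imp_div_less)
    then have "r div 2 ^ n = qbit n r" "y div 2 ^ n = qbit n y" by (simp_all add: qbit_def)
    then show ?thesis using Suc.prems(3) by simp
  qed
  ultimately show ?case by (metis div_mult_mod_eq)
qed

definition pe :: "nat \<Rightarrow> (nat \<Rightarrow> nat) \<Rightarrow> nat \<Rightarrow> nat \<Rightarrow> complex" where
  "pe n s r c = (\<Prod>k<n. pauli1 (s k) (qbit k r) (qbit k c))"

definition SS :: "nat \<Rightarrow> (nat \<Rightarrow> nat) set" where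
  "SS n = PiE {..<n} (\<lambda>_. {..<4::nat})"

lemma finite_SS: "finite (SS n)" unfolding SS_def by (simp add: finite_PiE)

lemma pauli_string_carrier: "pauli_string n s \<in> carrier_mat (2^n) (2^n)"
  by (simp add: pauli_string_def)

lemma pauli_string_idx: "r < 2^n \<Longrightarrow> c < 2^n \<Longrightarrow> pauli_string n s $$ (r,c) = pe n s r c"
  by (simp add: pauli_string_def pe_def)

lemma pe_restrict: "pe n (restrict s {..<n}) = pe n s"
  by (intro ext) (simp add: pe_def)

lemma ps_pe: "pauli_string n s = mat (2 ^ n) (2 ^ n) (\<lambda>(r,c). pe n s r c)"
  by (simp add: pauli_string_def pe_def)

lemma pauli_string_restrict: "pauli_string n (restrict s {..<n}) = pauli_string n s"
  by (simp only: ps_pe pe_restrict)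

lemma lt4_cases: "(p::nat) < 4 \<Longrightarrow> p = 0 \<or> p = 1 \<or> p = 2 \<or> p = 3" by auto

lemma pauli1_orth:
  assumes "p < 4" "q < 4"
  shows "(\<Sum>a\<in>{0,1::nat}. \<Sum>b\<in>{0,1::nat}. cnj (pauli1 p a b) * pauli1 q a b) = (if p = q then 2 else 0)"
  using lt4_cases[OF assms(1)] lt4_cases[OF assms(2)]
  by (auto simp: pauli1_def)

lemma sum2: "(\<Sum>b\<in>{0,1::nat}. f b) = f 0 + f 1" by simp

lemma pe_orth:
  assumes "s \<in> SS n" "t \<in> SS n"
  shows "(\<Sum>r<2^n. \<Sum>c<2^n. cnj (pe n s r c) * pe n t r c) = (if s = t then 2 ^ n else 0)"
proof -
  have "(\<Sum>r<2^n. \<Sum>c<2^n. cnj (pe n s r c) * pe n t r c)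
     = (\<Sum>r<2^n. \<Sum>c<2^n. \<Prod>k<n. cnj (pauli1 (s k) (qbit k r) (qbit k c)) * pauli1 (t k) (qbit k r) (qbit k c))"
    by (simp add: pe_def prod.distrib)
  also have "\<dots> = (\<Sum>r<2^n. \<Prod>k<n. \<Sum>b\<in>{0,1::nat}. cnj (pauli1 (s k) (qbit k r) b) * pauli1 (t k) (qbit k r) b)"
    by (intro sum.cong refl) (simp add: bit_factor[where f = "\<lambda>k b. cnj (pauli1 (s k) (qbit k _) b) * pauli1 (t k) (qbit k _) b"])
  also have "\<dots> = (\<Prod>k<n. \<Sum>a\<in>{0,1::nat}. \<Sum>b\<in>{0,1::nat}. cnj (pauli1 (s k) a b) * pauli1 (t k) a b)"
    using bit_factor[where f = "\<lambda>k a. \<Sum>b\<in>{0,1::nat}. cnj (pauli1 (s k) a b) * pauli1 (t k) a b"]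
    by simp
  also have "\<dots> = (\<Prod>k<n. if s k = t k then 2 else 0)"
    using assms by (intro prod.cong refl pauli1_orth) (auto simp: SS_def)
  also have "\<dots> = (if s = t then 2 ^ n else 0)"
  proof (cases "s = t")
    case True then show ?thesis by simp
  next
    case False
    then obtain k where "k < n" "s k \<noteq> t k" using assms unfolding SS_def
      by (metis PiE_ext lessThan_iff)
    have "(\<Prod>k<n. if s k = t k then 2 else 0) = (0::complex)"
      by (rule prod_zero) (use \<open>k<n\<close> \<open>s k \<noteq> t k\<close> in auto)
    then show ?thesis using False by simp
  qed
  finally show ?thesis .
qed

definition dec :: "real \<Rightarrow> nat \<Rightarrow> (nat \<Rightarrow> nat) \<Rightarrow> real" where
  "dec g n s = (\<Prod>k<n. if s k = 0 then 1 else 1 - g)"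

lemma dec_nonneg: "g \<le> 1 \<Longrightarrow> 0 \<le> dec g n s"
  unfolding dec_def by (intro prod_nonneg) auto

lemma sum_dec_pow:
  assumes "g \<le> 1"
  shows "(\<Sum>s\<in>SS n. dec g n s ^ m) = (1 + 3 * (1 - g) ^ m) ^ n"
proof -
  have "(\<Sum>s\<in>SS n. dec g n s ^ m) = (\<Sum>s\<in>SS n. \<Prod>k<n. (\<lambda>k v. if v = 0 then 1 else (1 - g) ^ m) k (s k))"
    unfolding dec_def prod_power_distrib by (intro sum.cong refl prod.cong) auto
  also have "\<dots> = (\<Prod>k<n. \<Sum>v\<in>{..<4::nat}. if v = 0 then 1 else (1 - g) ^ m)"
    unfolding SS_def by (subst prod_sum_PiE) auto
  also have "(\<Sum>v<4::nat. if v = 0 then 1 else (1 - g) ^ m) = 1 + 3 * (1 - g) ^ m"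
    by (simp add: numeral_eq_Suc)
  finally show ?thesis by simp
qed

lemma dagger_carrier: "A \<in> carrier_mat m k \<Longrightarrow> dagger A \<in> carrier_mat k m"
  by (simp add: dagger_def)

lemma dagger_idx: "i < dim_col A \<Longrightarrow> j < dim_row A \<Longrightarrow> dagger A $$ (i,j) = cnj (A $$ (j,i))"
  by (simp add: dagger_def)

lemma dagger_dims[simp]: "dim_row (dagger A) = dim_col A" "dim_col (dagger A) = dim_row A"
  by (simp_all add: dagger_def)

lemma dagger_mult:
  assumes "A \<in> carrier_mat m k" "B \<in> carrier_mat k l"
  shows "dagger (A * B) = dagger B * dagger A"
  using assms
  by (intro eq_matI) (auto simp: dagger_idx scalar_prod_def row_def col_def mult.commute)

lemma dagger_dagger: "dagger (dagger A) = A"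
  by (intro eq_matI) (auto simp: dagger_idx)

lemma mtrace_comm:
  assumes "A \<in> carrier_mat m k" "B \<in> carrier_mat k m"
  shows "mtrace (A * B) = mtrace (B * A)"
  using assms unfolding mtrace_def
  by (simp add: scalar_prod_def row_def col_def atLeast0LessThan)
     (subst sum.swap, simp add: mult.commute)

definition inner :: "nat \<Rightarrow> complex mat \<Rightarrow> complex mat \<Rightarrow> complex" where
  "inner N A B = (\<Sum>r<N. \<Sum>c<N. cnj (A $$ (r,c)) * B $$ (r,c))"

lemma inner_trace:
  assumes "A \<in> carrier_mat N N" "B \<in> carrier_mat N N"
  shows "inner N A B = mtrace (dagger A * B)"
  using assms unfolding mtrace_def inner_def
  by (simp add: scalar_prod_def row_def col_def atLeast0LessThan dagger_idx)
     (subst sum.swap, simp)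

lemma inner_conj:
  assumes V: "unitary_op N V" and A: "A \<in> carrier_mat N N" and B: "B \<in> carrier_mat N N"
  shows "inner N (V * A * dagger V) (V * B * dagger V) = inner N A B"
proof -
  have Vc: "V \<in> carrier_mat N N" and VV: "dagger V * V = 1\<^sub>m N" using V unfolding unitary_op_def by auto
  have Vd: "dagger V \<in> carrier_mat N N" using dagger_carrier[OF Vc] .
  have Ad: "dagger A \<in> carrier_mat N N" using dagger_carrier[OF A] .
  have d1: "dagger (A * dagger V) = V * dagger A" using dagger_mult[OF A Vd] dagger_dagger by simp
  have AV: "A * dagger V \<in> carrier_mat N N" using A Vd by simp
  have "dagger (V * A * dagger V) = dagger (V * (A * dagger V))" using Vc A Vd by simp
  also have "\<dots> = dagger (A * dagger V) * dagger V" by (rule dagger_mult[OF Vc AV])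
  finally have "dagger (V * A * dagger V) = V * dagger A * dagger V" using d1 by simp
  then have "inner N (V * A * dagger V) (V * B * dagger V) = mtrace (V * dagger A * dagger V * (V * B * dagger V))"
    using Vc Vd A B by (simp add: inner_trace)
  also have "V * dagger A * dagger V * (V * B * dagger V) = V * (dagger A * B * dagger V)"
  proof -
    have "V * dagger A * dagger V * (V * B * dagger V) = V * (dagger A * ((dagger V * V) * (B * dagger V)))"
      using Vc Vd Ad B by (simp add: assoc_mult_mat[of _ N N _ N _ N])
    also have "\<dots> = V * (dagger A * (B * dagger V))" using VV B Vd by simp
    also have "\<dots> = V * (dagger A * B * dagger V)" using Ad B Vd by (simp add: assoc_mult_mat[of _ N N _ N _ N])
    finally show ?thesis .
  qed
  also have "mtrace \<dots> = mtrace ((dagger A * B * dagger V) * V)"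
    by (rule mtrace_comm[of _ N N]) (use Vc Vd Ad B in auto)
  also have "(dagger A * B * dagger V) * V = dagger A * B"
    using Ad B Vd Vc VV by (simp add: assoc_mult_mat[of _ N N _ N _ N])
  finally show ?thesis using A B by (simp add: inner_trace)
qed

lemma inner_self: "inner N A A = of_real (\<Sum>r<N. \<Sum>c<N. (cmod (A $$ (r,c)))\<^sup>2)"
  unfolding inner_def of_real_sum by (intro sum.cong refl) (metis complex_norm_square mult.commute)

definition mat_of :: "nat \<Rightarrow> nat set \<Rightarrow> (nat \<Rightarrow> complex) \<Rightarrow> (nat \<Rightarrow> nat \<Rightarrow> nat) \<Rightarrow> complex mat" where
  "mat_of n Z \<alpha> \<sigma> = mat (2 ^ n) (2 ^ n) (\<lambda>(r,c). \<Sum>z\<in>Z. \<alpha> z * pe n (\<sigma> z) r c)"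

lemma ps_dims[simp]: "dim_row (pauli_string n s) = 2^n" "dim_col (pauli_string n s) = 2^n"
  by (simp_all add: pauli_string_def)

lemma mat_of_carrier: "mat_of n Z \<alpha> \<sigma> \<in> carrier_mat (2^n) (2^n)"
  by (simp add: mat_of_def)

lemma mat_of_idx: "r < 2^n \<Longrightarrow> c < 2^n \<Longrightarrow> mat_of n Z \<alpha> \<sigma> $$ (r,c) = (\<Sum>z\<in>Z. \<alpha> z * pe n (\<sigma> z) r c)"
  by (simp add: mat_of_def)

lemma pauli1_diag_sum: "p < 4 \<Longrightarrow> pauli1 p 0 0 + pauli1 p 1 1 = (if p = 0 then 2 else 0)"
  using lt4_cases[of p] by (auto simp: pauli1_def)

lemma pe_set_qbit:
  assumes "k < n" "b < 2"
  shows "pe n s (set_qbit k r b) (set_qbit k c b) = pauli1 (s k) b b * (\<Prod>j\<in>{..<n}-{k}. pauli1 (s j) (qbit j r) (qbit j c))"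
proof -
  have "pe n s (set_qbit k r b) (set_qbit k c b) = pauli1 (s k) (qbit k (set_qbit k r b)) (qbit k (set_qbit k c b)) *
      (\<Prod>j\<in>{..<n}-{k}. pauli1 (s j) (qbit j (set_qbit k r b)) (qbit j (set_qbit k c b)))"
    unfolding pe_def using assms(1) by (subst prod.remove[of _ k]) auto
  also have "\<dots> = pauli1 (s k) b b * (\<Prod>j\<in>{..<n}-{k}. pauli1 (s j) (qbit j r) (qbit j c))"
    using assms(2) by (simp add: qbit_set_qbit)
  finally show ?thesis .
qed

lemma pe_split:
  assumes "k < n"
  shows "pe n s r c = pauli1 (s k) (qbit k r) (qbit k c) * (\<Prod>j\<in>{..<n}-{k}. pauli1 (s j) (qbit j r) (qbit j c))"
  unfolding pe_def using assms by (subst prod.remove[of _ k]) auto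

lemma pe_depol:
  assumes "k < n" "s k < 4"
  shows "complex_of_real (1 - g) * pe n s r c + (if qbit k r = qbit k c then complex_of_real (g / 2) *
            (\<Sum>b\<in>{0, 1::nat}. pe n s (set_qbit k r b) (set_qbit k c b)) else 0)
        = (if s k = 0 then 1 else complex_of_real (1 - g)) * pe n s r c"
proof -
  define R where "R = (\<Prod>j\<in>{..<n}-{k}. pauli1 (s j) (qbit j r) (qbit j c))"
  have sb: "(\<Sum>b\<in>{0, 1::nat}. pe n s (set_qbit k r b) (set_qbit k c b)) = (if s k = 0 then 2 else 0) * R"
    using pe_set_qbit[OF assms(1), of 0 s r c] pe_set_qbit[OF assms(1), of 1 s r c] pauli1_diag_sum[OF assms(2)]
    unfolding R_def by (simp add: distrib_right[symmetric])
  have ps: "pe n s r c = pauli1 (s k) (qbit k r) (qbit k c) * R" unfolding R_def by (rule pe_split[OF assms(1)])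
  show ?thesis
  proof (cases "s k = 0")
    case True
    show ?thesis
    proof (cases "qbit k r = qbit k c")
      case eq: True
      have "pe n s r c = R" using ps True eq by (simp add: pauli1_def)
      then show ?thesis using sb True eq by (simp add: algebra_simps)
    next
      case ne: False
      have "pe n s r c = 0" using ps True ne by (simp add: pauli1_def)
      then show ?thesis using ne by simp
    qed
  next
    case False
    then show ?thesis using sb ps by auto
  qed
qed

lemma depol_qubit_mat_of:
  assumes "k < n" "\<And>z. z \<in> Z \<Longrightarrow> \<sigma> z k < 4"
  shows "depol_qubit g n k (mat_of n Z \<alpha> \<sigma>) = mat_of n Z (\<lambda>z. \<alpha> z * (if \<sigma> z k = 0 then 1 else complex_of_real (1 - g))) \<sigma>"
proof (rule eq_matI)
  fix r c assume rc: "r < dim_row (mat_of n Z (\<lambda>z. \<alpha> z * (if \<sigma> z k = 0 then 1 else complex_of_real (1 - g))) \<sigma>)"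
    "c < dim_col (mat_of n Z (\<lambda>z. \<alpha> z * (if \<sigma> z k = 0 then 1 else complex_of_real (1 - g))) \<sigma>)"
  then have r: "r < 2^n" and c: "c < 2^n" by (auto simp: mat_of_def)
  have sr: "set_qbit k r b < 2^n" "set_qbit k c b < 2^n" if "b < 2" for b
    using set_qbit_lt[OF assms(1) r that] set_qbit_lt[OF assms(1) c that] by auto
  have "depol_qubit g n k (mat_of n Z \<alpha> \<sigma>) $$ (r, c) =
     complex_of_real (1 - g) * (\<Sum>z\<in>Z. \<alpha> z * pe n (\<sigma> z) r c)
      + (if qbit k r = qbit k c then complex_of_real (g / 2) *
         (\<Sum>b\<in>{0, 1::nat}. \<Sum>z\<in>Z. \<alpha> z * pe n (\<sigma> z) (set_qbit k r b) (set_qbit k c b)) else 0)"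
    unfolding depol_qubit_def using r c sr by (simp add: mat_of_idx)
  also have "\<dots> = (\<Sum>z\<in>Z. complex_of_real (1 - g) * (\<alpha> z * pe n (\<sigma> z) r c) + (if qbit k r = qbit k c then complex_of_real (g / 2) *
            (\<alpha> z * pe n (\<sigma> z) (set_qbit k r 0) (set_qbit k c 0) + \<alpha> z * pe n (\<sigma> z) (set_qbit k r 1) (set_qbit k c 1)) else 0))"
    by (cases "qbit k r = qbit k c") (simp_all add: sum.distrib sum_distrib_left distrib_left)
  also have "\<dots> = (\<Sum>z\<in>Z. \<alpha> z * (if \<sigma> z k = 0 then 1 else complex_of_real (1 - g)) * pe n (\<sigma> z) r c)"
  proof (intro sum.cong refl)
    fix z assume z: "z \<in> Z"
    have e: "complex_of_real (1 - g) * pe n (\<sigma> z) r c + (if qbit k r = qbit k c then complex_of_real (g / 2) *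
            (pe n (\<sigma> z) (set_qbit k r 0) (set_qbit k c 0) + pe n (\<sigma> z) (set_qbit k r 1) (set_qbit k c 1)) else 0)
        = (if \<sigma> z k = 0 then 1 else complex_of_real (1 - g)) * pe n (\<sigma> z) r c"
      using pe_depol[of k n "\<sigma> z", OF assms(1) assms(2)[OF z], of g r c] by (simp only: sum2)
    show "complex_of_real (1 - g) * (\<alpha> z * pe n (\<sigma> z) r c) + (if qbit k r = qbit k c then complex_of_real (g / 2) *
            (\<alpha> z * pe n (\<sigma> z) (set_qbit k r 0) (set_qbit k c 0) + \<alpha> z * pe n (\<sigma> z) (set_qbit k r 1) (set_qbit k c 1)) else 0)
        = \<alpha> z * (if \<sigma> z k = 0 then 1 else complex_of_real (1 - g)) * pe n (\<sigma> z) r c"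
      using arg_cong[OF e, of "\<lambda>x. \<alpha> z * x"] by (cases "qbit k r = qbit k c") (simp_all add: algebra_simps)
  qed
  finally show "depol_qubit g n k (mat_of n Z \<alpha> \<sigma>) $$ (r, c) =
     mat_of n Z (\<lambda>z. \<alpha> z * (if \<sigma> z k = 0 then 1 else complex_of_real (1 - g))) \<sigma> $$ (r, c)"
    using r c by (simp add: mat_of_idx)
qed (auto simp: depol_qubit_def mat_of_def)

definition decc :: "real \<Rightarrow> nat \<Rightarrow> nat \<Rightarrow> (nat \<Rightarrow> nat) \<Rightarrow> complex" where
  "decc g m n s = (\<Prod>k<m. if s k = 0 then 1 else complex_of_real (1 - g))"

lemma depol_all_mat_of:
  assumes "m \<le> n" "\<And>z. z \<in> Z \<Longrightarrow> \<sigma> z \<in> SS n"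
  shows "depol_all g n m (mat_of n Z \<alpha> \<sigma>) = mat_of n Z (\<lambda>z. \<alpha> z * decc g m n (\<sigma> z)) \<sigma>"
  using assms(1)
proof (induction m)
  case 0 then show ?case by (simp add: decc_def)
next
  case (Suc m)
  have mn: "m < n" using Suc.prems by simp
  have lt: "\<sigma> z m < 4" if "z \<in> Z" for z
    using PiE_mem[OF assms(2)[OF that, unfolded SS_def], of m] mn by simp
  have "depol_all g n (Suc m) (mat_of n Z \<alpha> \<sigma>) = depol_qubit g n m (depol_all g n m (mat_of n Z \<alpha> \<sigma>))"
    by simp
  also have "\<dots> = depol_qubit g n m (mat_of n Z (\<lambda>z. \<alpha> z * decc g m n (\<sigma> z)) \<sigma>)"
    using Suc.IH mn by simp
  also have "\<dots> = mat_of n Z (\<lambda>z. \<alpha> z * decc g m n (\<sigma> z) * (if \<sigma> z m = 0 then 1 else complex_of_real (1 - g))) \<sigma>"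
    by (rule depol_qubit_mat_of[of m n Z \<sigma>, OF mn lt])
  also have "(\<lambda>z. \<alpha> z * decc g m n (\<sigma> z) * (if \<sigma> z m = 0 then 1 else complex_of_real (1 - g))) = (\<lambda>z. \<alpha> z * decc g (Suc m) n (\<sigma> z))"
    by (simp add: decc_def mult.assoc)
  finally show ?case .
qed

lemma decc_dec: "decc g n n s = complex_of_real (dec g n s)"
  unfolding decc_def dec_def of_real_prod by (intro prod.cong refl) simp

lemma conj_entry:
  assumes "V \<in> carrier_mat N N" "X \<in> carrier_mat N N" "r < N" "c < N"
  shows "(V * X * dagger V) $$ (r,c) = (\<Sum>i<N. \<Sum>j<N. V $$ (r,i) * X $$ (i,j) * cnj (V $$ (c,j)))"
  using assms
  by (simp add: scalar_prod_def row_def col_def atLeast0LessThan dagger_idx sum_distrib_right)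
     (subst sum.swap, simp)

lemma conj_mat_of:
  assumes V: "V \<in> carrier_mat (2^n) (2^n)" and fin: "finite Z"
    and h: "\<And>z. z \<in> Z \<Longrightarrow> V * pauli_string n (\<sigma> z) * dagger V = ph z \<cdot>\<^sub>m pauli_string n (\<tau> z)"
  shows "V * mat_of n Z \<alpha> \<sigma> * dagger V = mat_of n Z (\<lambda>z. \<alpha> z * ph z) \<tau>"
proof (rule eq_matI)
  fix r c assume "r < dim_row (mat_of n Z (\<lambda>z. \<alpha> z * ph z) \<tau>)" "c < dim_col (mat_of n Z (\<lambda>z. \<alpha> z * ph z) \<tau>)"
  then have r: "r < 2^n" and c: "c < 2^n" by (auto simp: mat_of_def)
  have "(V * mat_of n Z \<alpha> \<sigma> * dagger V) $$ (r,c) = (\<Sum>i<2^n. \<Sum>j<2^n. V $$ (r,i) * (\<Sum>z\<in>Z. \<alpha> z * pe n (\<sigma> z) i j) * cnj (V $$ (c,j)))"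
    using conj_entry[OF V mat_of_carrier r c] by (simp add: mat_of_idx)
  also have "\<dots> = (\<Sum>z\<in>Z. \<alpha> z * (\<Sum>i<2^n. \<Sum>j<2^n. V $$ (r,i) * pe n (\<sigma> z) i j * cnj (V $$ (c,j))))"
  proof -
    have "V $$ (r,i) * (\<Sum>z\<in>Z. \<alpha> z * pe n (\<sigma> z) i j) * cnj (V $$ (c,j)) = (\<Sum>z\<in>Z. \<alpha> z * (V $$ (r,i) * pe n (\<sigma> z) i j * cnj (V $$ (c,j))))" for i j
      by (simp add: sum_distrib_left sum_distrib_right mult_ac)
    then have "(\<Sum>i<2^n. \<Sum>j<2^n. V $$ (r,i) * (\<Sum>z\<in>Z. \<alpha> z * pe n (\<sigma> z) i j) * cnj (V $$ (c,j)))
      = (\<Sum>i<2^n. \<Sum>j<2^n. \<Sum>z\<in>Z. \<alpha> z * (V $$ (r,i) * pe n (\<sigma> z) i j * cnj (V $$ (c,j))))" by simp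
    also have "\<dots> = (\<Sum>i<2^n. \<Sum>z\<in>Z. \<Sum>j<2^n. \<alpha> z * (V $$ (r,i) * pe n (\<sigma> z) i j * cnj (V $$ (c,j))))"
      by (rule sum.cong[OF refl], rule sum.swap)
    also have "\<dots> = (\<Sum>z\<in>Z. \<Sum>i<2^n. \<Sum>j<2^n. \<alpha> z * (V $$ (r,i) * pe n (\<sigma> z) i j * cnj (V $$ (c,j))))"
      by (rule sum.swap)
    also have "\<dots> = (\<Sum>z\<in>Z. \<alpha> z * (\<Sum>i<2^n. \<Sum>j<2^n. V $$ (r,i) * pe n (\<sigma> z) i j * cnj (V $$ (c,j))))"
      by (simp add: sum_distrib_left)
    finally show ?thesis .
  qed
  also have "\<dots> = (\<Sum>z\<in>Z. \<alpha> z * (V * pauli_string n (\<sigma> z) * dagger V) $$ (r,c))"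
    using conj_entry[OF V pauli_string_carrier r c] by (simp add: pauli_string_idx)
  also have "\<dots> = (\<Sum>z\<in>Z. \<alpha> z * ph z * pe n (\<tau> z) r c)"
    using r c by (intro sum.cong refl) (simp add: h pauli_string_idx ps_dims)
  finally show "(V * mat_of n Z \<alpha> \<sigma> * dagger V) $$ (r,c) = mat_of n Z (\<lambda>z. \<alpha> z * ph z) \<tau> $$ (r,c)"
    using r c by (simp add: mat_of_idx)
qed (use V in \<open>auto simp: mat_of_def\<close>)

lemma one_smult_mat': "(1::complex) \<cdot>\<^sub>m A = A"
  by (intro eq_matI) auto

definition cl :: "nat \<Rightarrow> complex mat \<Rightarrow> (nat \<Rightarrow> nat) \<Rightarrow> complex \<times> (nat \<Rightarrow> nat)" where
  "cl n V s = (SOME p. fst p \<in> {1, -1, \<i>, -\<i>} \<and> (\<forall>k<n. snd p k < 4) \<and>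
      V * pauli_string n s * dagger V = fst p \<cdot>\<^sub>m pauli_string n (snd p))"

definition cperm :: "nat \<Rightarrow> complex mat \<Rightarrow> (nat \<Rightarrow> nat) \<Rightarrow> (nat \<Rightarrow> nat)" where
  "cperm n V s = restrict (snd (cl n V s)) {..<n}"

definition cph :: "nat \<Rightarrow> complex mat \<Rightarrow> (nat \<Rightarrow> nat) \<Rightarrow> complex" where
  "cph n V s = fst (cl n V s)"

lemma SS_lt4: "s \<in> SS n \<Longrightarrow> k < n \<Longrightarrow> s k < 4"
  unfolding SS_def using PiE_mem[of s "{..<n}" "\<lambda>_. {..<4::nat}" k] by simp

lemma cl_props:
  assumes V: "clifford n V" and s: "s \<in> SS n"
  shows "cph n V s \<in> {1, -1, \<i>, -\<i>}" "cperm n V s \<in> SS n"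
    "V * pauli_string n s * dagger V = cph n V s \<cdot>\<^sub>m pauli_string n (cperm n V s)"
proof -
  have "pauli_string n s \<in> pauli_group n"
    unfolding pauli_group_def using SS_lt4[OF s] by (auto intro!: exI[of _ 1] simp: one_smult_mat')
  then have "V * pauli_string n s * dagger V \<in> pauli_group n" using V unfolding clifford_def by blast
  then obtain ph s' where h: "ph \<in> {1, -1, \<i>, -\<i>}" "\<forall>k<n. s' k < 4"
      "V * pauli_string n s * dagger V = ph \<cdot>\<^sub>m pauli_string n s'"
    unfolding pauli_group_def by blast
  then have "\<exists>p. fst p \<in> {1, -1, \<i>, -\<i>} \<and> (\<forall>k<n. snd p k < 4) \<and>
      V * pauli_string n s * dagger V = fst p \<cdot>\<^sub>m pauli_string n (snd p)"
    by (intro exI[of _ "(ph, s')"]) simp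
  from someI_ex[OF this] have c: "fst (cl n V s) \<in> {1, -1, \<i>, -\<i>} \<and> (\<forall>k<n. snd (cl n V s) k < 4) \<and>
      V * pauli_string n s * dagger V = fst (cl n V s) \<cdot>\<^sub>m pauli_string n (snd (cl n V s))"
    unfolding cl_def .
  then show "cph n V s \<in> {1, -1, \<i>, -\<i>}" unfolding cph_def by simp
  show "cperm n V s \<in> SS n" using c unfolding cperm_def SS_def restrict_PiE_iff by auto
  show "V * pauli_string n s * dagger V = cph n V s \<cdot>\<^sub>m pauli_string n (cperm n V s)"
    using c unfolding cph_def cperm_def pauli_string_restrict by simp
qed

lemma norm_ph: "ph \<in> {1, -1, \<i>, -\<i>} \<Longrightarrow> cmod ph = 1"
  by auto

lemma inner_smult:
  assumes "A \<in> carrier_mat N N" "B \<in> carrier_mat N N"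
  shows "inner N (a \<cdot>\<^sub>m A) (b \<cdot>\<^sub>m B) = cnj a * b * inner N A B"
  using assms unfolding inner_def by (simp add: sum_distrib_left mult_ac)

lemma inner_ps:
  assumes "s \<in> SS n" "t \<in> SS n"
  shows "inner (2^n) (pauli_string n s) (pauli_string n t) = (if s = t then 2 ^ n else 0)"
  unfolding inner_def using pe_orth[OF assms] by (simp add: pauli_string_idx)

lemma cperm_inj:
  assumes V: "clifford n V" and s: "s \<in> SS n" and t: "t \<in> SS n" and eq: "cperm n V s = cperm n V t"
  shows "s = t"
proof (rule ccontr)
  assume ne: "s \<noteq> t"
  have U: "unitary_op (2^n) V" using V unfolding clifford_def by simp
  have "inner (2^n) (V * pauli_string n s * dagger V) (V * pauli_string n t * dagger V)
      = inner (2^n) (pauli_string n s) (pauli_string n t)"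
    by (rule inner_conj[OF U pauli_string_carrier pauli_string_carrier])
  also have "\<dots> = 0" using inner_ps[OF s t] ne by simp
  finally have z: "inner (2^n) (V * pauli_string n s * dagger V) (V * pauli_string n t * dagger V) = 0" .
  have "inner (2^n) (V * pauli_string n s * dagger V) (V * pauli_string n t * dagger V)
     = cnj (cph n V s) * cph n V t * inner (2^n) (pauli_string n (cperm n V s)) (pauli_string n (cperm n V s))"
    unfolding cl_props(3)[OF V s] cl_props(3)[OF V t] eq[symmetric]
    by (rule inner_smult[OF pauli_string_carrier pauli_string_carrier])
  also have "\<dots> = cnj (cph n V s) * cph n V t * 2 ^ n"
    using inner_ps[OF cl_props(2)[OF V s] cl_props(2)[OF V s]] by simp
  finally have "cnj (cph n V s) * cph n V t * 2 ^ n = 0" using z by simp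
  moreover have "cph n V s \<noteq> 0" "cph n V t \<noteq> 0"
    using norm_ph[OF cl_props(1)[OF V s]] norm_ph[OF cl_props(1)[OF V t]] by auto
  ultimately show False by simp
qed

definition sig0 :: "nat \<Rightarrow> nat \<Rightarrow> nat \<Rightarrow> nat" where
  "sig0 n z = restrict (\<lambda>k. 3 * qbit k z) {..<n}"

definition alpha0 :: "nat \<Rightarrow> nat \<Rightarrow> nat \<Rightarrow> complex" where
  "alpha0 n y z = (\<Prod>k<n. if qbit k y = 1 \<and> qbit k z = 1 then -1 else 1) / 2 ^ n"

lemma sig0_SS: "sig0 n z \<in> SS n"
proof -
  have "3 * qbit i z < 4" for i using qbit_01[of i z] by auto
  then show ?thesis unfolding sig0_def SS_def restrict_PiE_iff by auto
qed

lemma sig0_inj: "inj_on (sig0 n) {..<2^n}"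
proof (rule inj_onI)
  fix z w assume z: "z \<in> {..<2^n}" and w: "w \<in> {..<2^n}" and e: "sig0 n z = sig0 n w"
  have "\<forall>k<n. qbit k z = qbit k w"
  proof (intro allI impI)
    fix k assume "k < n"
    then have "sig0 n z k = sig0 n w k" using e by simp
    then show "qbit k z = qbit k w" using \<open>k < n\<close> by (simp add: sig0_def)
  qed
  then show "z = w" using bits_eq z w by auto
qed

lemma norm_alpha0: "cmod (alpha0 n y z) = 1 / 2 ^ n"
proof -
  have "cmod (\<Prod>k<n. (if qbit k y = 1 \<and> qbit k z = 1 then -1 else 1 :: complex)) = 1"
    unfolding prod_norm[symmetric] by (intro prod.neutral) auto
  then show ?thesis unfolding alpha0_def by (simp add: norm_divide norm_power)
qed

lemma half_sum:
  assumes "a < 2" "b < 2" "(yk::nat) < 2"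
  shows "(if yk = 1 \<and> (0::nat) = 1 then -1 else 1) * pauli1 (3 * 0) a b / 2
       + (if yk = 1 \<and> (1::nat) = 1 then -1 else 1) * pauli1 (3 * 1) a b / 2
       = (if a = yk \<and> b = yk then 1 else (0::complex))"
  using assms by (auto simp: pauli1_def less_Suc_eq)

lemma ketbra_mat_of:
  assumes y: "y < 2 ^ n"
  shows "ketbra n y = mat_of n {..<2^n} (alpha0 n y) (sig0 n)"
proof (rule eq_matI)
  fix r c assume "r < dim_row (mat_of n {..<2^n} (alpha0 n y) (sig0 n))" "c < dim_col (mat_of n {..<2^n} (alpha0 n y) (sig0 n))"
  then have r: "r < 2^n" and c: "c < 2^n" by (auto simp: mat_of_def)
  define h where "h k b = (if qbit k y = 1 \<and> b = 1 then -1 else 1) * pauli1 (3 * b) (qbit k r) (qbit k c) / 2" for k b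
  have "mat_of n {..<2^n} (alpha0 n y) (sig0 n) $$ (r,c) = (\<Sum>z<2^n. alpha0 n y z * pe n (sig0 n z) r c)"
    using r c by (simp add: mat_of_idx)
  also have "\<dots> = (\<Sum>z<2^n. \<Prod>k<n. h k (qbit k z))"
  proof (intro sum.cong refl)
    fix z
    have "(\<Prod>k<n. h k (qbit k z)) = (\<Prod>k<n. (if qbit k y = 1 \<and> qbit k z = 1 then -1 else 1) * pauli1 (3 * qbit k z) (qbit k r) (qbit k c)) / (\<Prod>k<n. 2)"
      unfolding h_def by (rule prod_dividef)
    also have "\<dots> = (\<Prod>k<n. (if qbit k y = 1 \<and> qbit k z = 1 then -1 else 1)) * (\<Prod>k<n. pauli1 (3 * qbit k z) (qbit k r) (qbit k c)) / 2 ^ n"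
      by (simp only: prod.distrib prod_constant card_lessThan)
    also have "\<dots> = alpha0 n y z * pe n (sig0 n z) r c"
      unfolding alpha0_def pe_def sig0_def by simp
    finally have "alpha0 n y z * pe n (sig0 n z) r c = (\<Prod>k<n. h k (qbit k z))" by simp
    then show "alpha0 n y z * pe n (sig0 n z) r c = (\<Prod>k<n. h k (qbit k z))" .
  qed
  also have "\<dots> = (\<Prod>k<n. h k 0 + h k 1)" by (rule bit_factor)
  also have "\<dots> = (\<Prod>k<n. if qbit k r = qbit k y \<and> qbit k c = qbit k y then 1 else 0)"
    unfolding h_def by (intro prod.cong refl) (rule half_sum[OF qbit_lt2 qbit_lt2 qbit_lt2])
  also have "\<dots> = (if r = y \<and> c = y then 1 else 0)"
  proof (cases "\<forall>k<n. qbit k r = qbit k y \<and> qbit k c = qbit k y")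
    case True
    then have "r = y" "c = y" using bits_eq[OF r y] bits_eq[OF c y] by auto
    then show ?thesis by simp
  next
    case False
    then obtain k where k: "k < n" "\<not> (qbit k r = qbit k y \<and> qbit k c = qbit k y)" by blast
    then have "(\<Prod>k<n. if qbit k r = qbit k y \<and> qbit k c = qbit k y then 1 else 0) = (0::complex)"
      by (intro prod_zero) auto
    moreover have "\<not> (r = y \<and> c = y)" using k by auto
    ultimately show ?thesis by simp
  qed
  finally show "ketbra n y $$ (r, c) = mat_of n {..<2^n} (alpha0 n y) (sig0 n) $$ (r,c)"
    using r c by (simp add: ketbra_def)
qed (auto simp: ketbra_def mat_of_def)

lemma swap3:
  "(\<Sum>r\<in>R. \<Sum>c\<in>C. \<Sum>z\<in>Z. F r c z) = (\<Sum>z\<in>Z. \<Sum>r\<in>R. \<Sum>c\<in>C. F r c z)"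
proof -
  have "(\<Sum>r\<in>R. \<Sum>c\<in>C. \<Sum>z\<in>Z. F r c z) = (\<Sum>r\<in>R. \<Sum>z\<in>Z. \<Sum>c\<in>C. F r c z)"
    by (rule sum.cong[OF refl], rule sum.swap)
  also have "\<dots> = (\<Sum>z\<in>Z. \<Sum>r\<in>R. \<Sum>c\<in>C. F r c z)" by (rule sum.swap)
  finally show ?thesis .
qed

lemma inner_mat_of:
  assumes fin: "finite Z" and inj: "inj_on \<sigma> Z" and S: "\<And>z. z \<in> Z \<Longrightarrow> \<sigma> z \<in> SS n"
  shows "inner (2^n) (mat_of n Z A \<sigma>) (mat_of n Z A \<sigma>) = 2 ^ n * (\<Sum>z\<in>Z. cnj (A z) * A z)"
proof -
  have "inner (2^n) (mat_of n Z A \<sigma>) (mat_of n Z A \<sigma>)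
      = (\<Sum>r<2^n. \<Sum>c<2^n. \<Sum>z\<in>Z. \<Sum>w\<in>Z. cnj (A z) * A w * (cnj (pe n (\<sigma> z) r c) * pe n (\<sigma> w) r c))"
  proof -
    have e: "cnj (\<Sum>z\<in>Z. A z * pe n (\<sigma> z) r c) * (\<Sum>w\<in>Z. A w * pe n (\<sigma> w) r c)
       = (\<Sum>z\<in>Z. \<Sum>w\<in>Z. cnj (A z) * A w * (cnj (pe n (\<sigma> z) r c) * pe n (\<sigma> w) r c))" for r c
      by (simp only: cnj_sum sum_product) (simp add: mult_ac)
    show ?thesis unfolding inner_def
    proof (intro sum.cong refl)
      fix r c assume r: "r \<in> {..<(2::nat)^n}" and c: "c \<in> {..<(2::nat)^n}"
      show "cnj (mat_of n Z A \<sigma> $$ (r, c)) * mat_of n Z A \<sigma> $$ (r, c) =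
         (\<Sum>z\<in>Z. \<Sum>w\<in>Z. cnj (A z) * A w * (cnj (pe n (\<sigma> z) r c) * pe n (\<sigma> w) r c))"
        using r c by (simp only: lessThan_iff mat_of_idx e)
    qed
  qed
  also have "\<dots> = (\<Sum>z\<in>Z. \<Sum>r<2^n. \<Sum>c<2^n. \<Sum>w\<in>Z. cnj (A z) * A w * (cnj (pe n (\<sigma> z) r c) * pe n (\<sigma> w) r c))"
    by (rule swap3)
  also have "\<dots> = (\<Sum>z\<in>Z. \<Sum>w\<in>Z. \<Sum>r<2^n. \<Sum>c<2^n. cnj (A z) * A w * (cnj (pe n (\<sigma> z) r c) * pe n (\<sigma> w) r c))"
    by (rule sum.cong[OF refl], rule swap3)
  also have "\<dots> = (\<Sum>z\<in>Z. \<Sum>w\<in>Z. cnj (A z) * A w * (\<Sum>r<2^n. \<Sum>c<2^n. cnj (pe n (\<sigma> z) r c) * pe n (\<sigma> w) r c))"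
    by (simp add: sum_distrib_left)
  also have "\<dots> = (\<Sum>z\<in>Z. \<Sum>w\<in>Z. if w = z then cnj (A z) * A z * 2 ^ n else 0)"
  proof (intro sum.cong refl)
    fix z w assume z: "z \<in> Z" and w: "w \<in> Z"
    have "(\<sigma> z = \<sigma> w) = (w = z)" using inj z w by (auto dest: inj_onD)
    then show "cnj (A z) * A w * (\<Sum>r<2^n. \<Sum>c<2^n. cnj (pe n (\<sigma> z) r c) * pe n (\<sigma> w) r c)
        = (if w = z then cnj (A z) * A z * 2 ^ n else 0)"
      using pe_orth[OF S[OF z] S[OF w]] by auto
  qed
  also have "\<dots> = (\<Sum>z\<in>Z. cnj (A z) * A z * 2 ^ n)"
    using fin by (simp add: sum.delta)
  finally show ?thesis by (simp add: sum_distrib_left mult_ac)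
qed

lemma mtrace_ketbra:
  assumes M: "M \<in> carrier_mat (2^n) (2^n)" and x: "x < 2^n"
  shows "mtrace (ketbra n x * M) = M $$ (x,x)"
proof -
  have "mtrace (ketbra n x * M) = (\<Sum>i<2^n. \<Sum>j<2^n. (if i = x \<and> j = x then 1 else 0) * M $$ (j,i))"
    unfolding mtrace_def using M by (simp add: ketbra_def scalar_prod_def row_def col_def atLeast0LessThan)
  also have "\<dots> = (\<Sum>i<2^n. if i = x then M $$ (x,i) else 0)"
  proof (intro sum.cong refl)
    fix i assume "i \<in> {..<(2::nat)^n}"
    show "(\<Sum>j<2^n. (if i = x \<and> j = x then 1 else 0) * M $$ (j,i)) = (if i = x then M $$ (x,i) else 0)"
    proof (cases "i = x")
      case True
      have "(\<Sum>j<2^n. (if i = x \<and> j = x then 1 else 0) * M $$ (j,i)) = (\<Sum>j<2^n. if j = x then M $$ (j,x) else 0)"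
        using True by (intro sum.cong refl) simp
      then show ?thesis using True x by (simp add: sum.delta)
    qed simp
  qed
  also have "\<dots> = M $$ (x,x)" using x by (simp add: sum.delta)
  finally show ?thesis .
qed

lemma trace_meas:
  assumes U: "U \<in> carrier_mat (2^n) (2^n)" and R: "\<rho> \<in> carrier_mat (2^n) (2^n)" and x: "x < 2^n"
  shows "mtrace (dagger U * ketbra n x * U * \<rho>) = (U * \<rho> * dagger U) $$ (x,x)"
proof -
  have K: "ketbra n x \<in> carrier_mat (2^n) (2^n)" by (simp add: ketbra_def)
  have Ud: "dagger U \<in> carrier_mat (2^n) (2^n)" using dagger_carrier[OF U] .
  have "dagger U * ketbra n x * U * \<rho> = dagger U * (ketbra n x * (U * \<rho>))"
    using U R K Ud by (simp add: assoc_mult_mat[of _ "2^n" "2^n" _ "2^n" _ "2^n"])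
  then have "mtrace (dagger U * ketbra n x * U * \<rho>) = mtrace ((ketbra n x * (U * \<rho>)) * dagger U)"
    using mtrace_comm[of "dagger U" "2^n" "2^n" "ketbra n x * (U * \<rho>)"] U R K Ud by simp
  also have "(ketbra n x * (U * \<rho>)) * dagger U = ketbra n x * (U * \<rho> * dagger U)"
    using U R K Ud by (simp add: assoc_mult_mat[of _ "2^n" "2^n" _ "2^n" _ "2^n"])
  also have "mtrace \<dots> = (U * \<rho> * dagger U) $$ (x,x)"
    by (rule mtrace_ketbra[OF _ x]) (use U R Ud in simp)
  finally show ?thesis .
qed

lemma sum_prob_sq:
  assumes U: "unitary_op (2^n) U" and R: "\<rho> \<in> carrier_mat (2^n) (2^n)"
  shows "(\<Sum>x<2^n. (Re (mtrace (dagger U * ketbra n x * U * \<rho>)))\<^sup>2) \<le> Re (inner (2^n) \<rho> \<rho>)"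
proof -
  have Uc: "U \<in> carrier_mat (2^n) (2^n)" using U unfolding unitary_op_def by simp
  define M where "M = U * \<rho> * dagger U"
  have "(\<Sum>x<2^n. (Re (mtrace (dagger U * ketbra n x * U * \<rho>)))\<^sup>2) = (\<Sum>x<2^n. (Re (M $$ (x,x)))\<^sup>2)"
    by (intro sum.cong refl) (simp add: trace_meas[OF Uc R] M_def)
  also have "\<dots> \<le> (\<Sum>x<2^n. (cmod (M $$ (x,x)))\<^sup>2)"
    by (intro sum_mono) (metis abs_Re_le_cmod abs_ge_zero power2_abs power_mono)
  also have "\<dots> \<le> (\<Sum>x<2^n. \<Sum>c<2^n. (cmod (M $$ (x,c)))\<^sup>2)"
    by (intro sum_mono member_le_sum) auto
  also have "\<dots> = Re (inner (2^n) M M)" by (simp add: inner_self)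
  also have "inner (2^n) M M = inner (2^n) \<rho> \<rho>" unfolding M_def by (rule inner_conj[OF U R R])
  finally show ?thesis .
qed

fun sg :: "nat \<Rightarrow> (nat \<Rightarrow> complex mat) \<Rightarrow> nat \<Rightarrow> nat \<Rightarrow> nat \<Rightarrow> nat" where
  "sg n Us 0 = sig0 n"
| "sg n Us (Suc t) = (\<lambda>z. cperm n (Us t) (sg n Us t z))"

fun phs :: "nat \<Rightarrow> (nat \<Rightarrow> complex mat) \<Rightarrow> nat \<Rightarrow> nat \<Rightarrow> complex" where
  "phs n Us 0 z = 1"
| "phs n Us (Suc t) z = phs n Us t z * cph n (Us t) (sg n Us t z)"

fun bt :: "real \<Rightarrow> nat \<Rightarrow> (nat \<Rightarrow> complex mat) \<Rightarrow> nat \<Rightarrow> nat \<Rightarrow> real" where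
  "bt g n Us 0 z = dec g n (sg n Us 0 z)"
| "bt g n Us (Suc t) z = bt g n Us t z * dec g n (sg n Us (Suc t) z)"

lemma sg_props:
  assumes cl: "\<forall>t<d. clifford n (Us t)" and td: "t \<le> d"
  shows "(\<forall>z. sg n Us t z \<in> SS n) \<and> inj_on (sg n Us t) {..<2^n} \<and> (\<forall>z. cmod (phs n Us t z) = 1)"
  using td
proof (induction t)
  case 0 then show ?case using sig0_SS sig0_inj by simp
next
  case (Suc t)
  have c: "clifford n (Us t)" using cl Suc.prems by simp
  have IH: "\<forall>z. sg n Us t z \<in> SS n" "inj_on (sg n Us t) {..<2^n}" "\<forall>z. cmod (phs n Us t z) = 1"
    using Suc by auto
  have "\<forall>z. sg n Us (Suc t) z \<in> SS n" using cl_props(2)[OF c] IH(1) by simp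
  moreover have "inj_on (sg n Us (Suc t)) {..<2^n}"
  proof (rule inj_onI)
    fix z w assume z: "z \<in> {..<2^n}" and w: "w \<in> {..<2^n}" and e: "sg n Us (Suc t) z = sg n Us (Suc t) w"
    have "sg n Us t z = sg n Us t w" using cperm_inj[OF c IH(1)[rule_format] IH(1)[rule_format]] e by simp
    then show "z = w" using IH(2) z w by (auto dest: inj_onD)
  qed
  moreover have "\<forall>z. cmod (phs n Us (Suc t) z) = 1"
    using IH(3) norm_ph[OF cl_props(1)[OF c IH(1)[rule_format]]] by (simp add: norm_mult)
  ultimately show ?case by blast
qed

lemma state_eq:
  assumes cl: "\<forall>t<d. clifford n (Us t)" and td: "t \<le> d" and y: "y < 2^n"
  shows "noisy_circuit g n Us t (ketbra n y) =
     mat_of n {..<2^n} (\<lambda>z. alpha0 n y z * phs n Us t z * complex_of_real (bt g n Us t z)) (sg n Us t)"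
  using td
proof (induction t)
  case 0
  have "noisy_circuit g n Us 0 (ketbra n y) = depol_all g n n (mat_of n {..<2^n} (alpha0 n y) (sig0 n))"
    using ketbra_mat_of[OF y] by simp
  also have "\<dots> = mat_of n {..<2^n} (\<lambda>z. alpha0 n y z * decc g n n (sig0 n z)) (sig0 n)"
    by (rule depol_all_mat_of) (auto simp: sig0_SS)
  finally show ?case by (simp add: decc_dec)
next
  case (Suc t)
  have c: "clifford n (Us t)" using cl Suc.prems by simp
  have Vc: "Us t \<in> carrier_mat (2^n) (2^n)" using c unfolding clifford_def unitary_op_def by simp
  have S: "\<And>z. sg n Us t z \<in> SS n" "\<And>z. sg n Us (Suc t) z \<in> SS n"
    using sg_props[OF cl, of t] sg_props[OF cl, of "Suc t"] Suc.prems by auto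
  have "noisy_circuit g n Us (Suc t) (ketbra n y) = depol_all g n n (Us t *
      mat_of n {..<2^n} (\<lambda>z. alpha0 n y z * phs n Us t z * complex_of_real (bt g n Us t z)) (sg n Us t) * dagger (Us t))"
    using Suc by simp
  also have "Us t * mat_of n {..<2^n} (\<lambda>z. alpha0 n y z * phs n Us t z * complex_of_real (bt g n Us t z)) (sg n Us t) * dagger (Us t)
     = mat_of n {..<2^n} (\<lambda>z. alpha0 n y z * phs n Us t z * complex_of_real (bt g n Us t z) * cph n (Us t) (sg n Us t z)) (sg n Us (Suc t))"
    by (rule conj_mat_of[OF Vc]) (auto simp: cl_props(3)[OF c S(1)])
  also have "depol_all g n n \<dots> = mat_of n {..<2^n} (\<lambda>z. alpha0 n y z * phs n Us t z * complex_of_real (bt g n Us t z) * cph n (Us t) (sg n Us t z)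
        * decc g n n (sg n Us (Suc t) z)) (sg n Us (Suc t))"
    by (rule depol_all_mat_of[OF order_refl S(2)])
  finally show ?case by (simp add: decc_dec mult_ac)
qed

lemma bt_prod: "bt g n Us t z = (\<Prod>t'\<in>{..t}. dec g n (sg n Us t' z))"
  by (induction t) (simp_all add: prod.atMost_Suc del: sg.simps)

lemma bt_nonneg: "g \<le> 1 \<Longrightarrow> 0 \<le> bt g n Us t z"
  unfolding bt_prod by (intro prod_nonneg) (simp add: dec_nonneg)

lemma per_y:
  assumes cl: "\<forall>t<d. clifford n (Us t)" and y: "y < 2^n" and U: "unitary_op (2^n) U" and g: "g \<le> 1"
  shows "(\<Sum>x<2^n. (out_prob g n Us d U y x)\<^sup>2) \<le> (\<Sum>z<2^n. (bt g n Us d z)\<^sup>2) / 2^n"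
proof -
  define A where "A z = alpha0 n y z * phs n Us d z * complex_of_real (bt g n Us d z)" for z
  have st: "noisy_circuit g n Us d (ketbra n y) = mat_of n {..<2^n} A (sg n Us d)"
    unfolding A_def by (rule state_eq[OF cl order_refl y])
  have P: "\<forall>z. sg n Us d z \<in> SS n" "inj_on (sg n Us d) {..<2^n}" "\<forall>z. cmod (phs n Us d z) = 1"
    using sg_props[OF cl order_refl] by auto
  have "(\<Sum>x<2^n. (out_prob g n Us d U y x)\<^sup>2) \<le> Re (inner (2^n) (mat_of n {..<2^n} A (sg n Us d)) (mat_of n {..<2^n} A (sg n Us d)))"
    unfolding out_prob_def st by (rule sum_prob_sq[OF U mat_of_carrier])
  also have "inner (2^n) (mat_of n {..<2^n} A (sg n Us d)) (mat_of n {..<2^n} A (sg n Us d)) = 2 ^ n * (\<Sum>z<2^n. cnj (A z) * A z)"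
    by (rule inner_mat_of) (use P in auto)
  also have "(\<Sum>z<2^n. cnj (A z) * A z) = (\<Sum>z<2^n. complex_of_real ((bt g n Us d z)\<^sup>2 / 2 ^ n / 2 ^ n))"
  proof (intro sum.cong refl)
    fix z
    have "cnj (A z) * A z = complex_of_real ((cmod (A z))\<^sup>2)" by (metis complex_norm_square mult.commute)
    also have "cmod (A z) = bt g n Us d z / 2 ^ n"
      unfolding A_def using P(3) norm_alpha0[of n y z] bt_nonneg[OF g, of n Us d z]
      by (simp add: norm_mult)
    finally show "cnj (A z) * A z = complex_of_real ((bt g n Us d z)\<^sup>2 / 2 ^ n / 2 ^ n)"
      by (simp add: power_divide power2_eq_square)
  qed
  also have "Re (2 ^ n * (\<Sum>z<2^n. complex_of_real ((bt g n Us d z)\<^sup>2 / 2 ^ n / 2 ^ n))) = (\<Sum>z<2^n. (bt g n Us d z)\<^sup>2) / 2^n"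
    by (simp add: sum_divide_distrib[symmetric] flip: of_real_sum)
  finally show ?thesis .
qed

lemma powr_pow_inv:
  fixes P :: real assumes "0 \<le> P" "0 < m"
  shows "(P ^ m) powr (1 / real m) = P"
proof (cases "P = 0")
  case True then show ?thesis using assms by simp
next
  case False
  then have "P > 0" using assms by simp
  then have "P ^ m = P powr real m" by (simp add: powr_realpow)
  then show ?thesis using \<open>P > 0\<close> assms by (simp add: powr_powr)
qed

lemma amgm:
  fixes x :: "nat \<Rightarrow> real"
  assumes "finite T" "T \<noteq> {}" "\<And>t. t \<in> T \<Longrightarrow> 0 \<le> x t"
  shows "(\<Prod>t\<in>T. x t) \<le> (\<Sum>t\<in>T. x t ^ card T / card T)"
proof -
  have cp: "0 < card T" using assms by (simp add: card_gt_0_iff)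
  have "(\<Prod>t\<in>T. x t ^ card T) powr (1 / card T) \<le> (\<Sum>t\<in>T. x t ^ card T / card T)"
    by (rule arith_geom_mean) (use assms in auto)
  moreover have "(\<Prod>t\<in>T. x t ^ card T) powr (1 / card T) = (\<Prod>t\<in>T. x t)"
    unfolding prod_power_distrib[symmetric] by (rule powr_pow_inv) (use assms cp in \<open>auto intro: prod_nonneg\<close>)
  ultimately show ?thesis by simp
qed

lemma total_bound:
  assumes cl: "\<forall>t<d. clifford n (Us t)" and g: "0 \<le> g" "g \<le> 1"
  shows "(\<Sum>z<2^n. (bt g n Us d z)\<^sup>2) \<le> (1 + 3 * (1 - g) ^ (2 * Suc d)) ^ n"
proof -
  let ?m = "Suc d"
  define x where "x t z = (dec g n (sg n Us t z))\<^sup>2" for t z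
  have "(\<Sum>z<2^n. (bt g n Us d z)\<^sup>2) = (\<Sum>z<2^n. \<Prod>t\<in>{..d}. x t z)"
    unfolding bt_prod x_def by (simp add: power2_eq_square prod.distrib)
  also have "\<dots> \<le> (\<Sum>z<2^n. \<Sum>t\<in>{..d}. x t z ^ ?m / ?m)"
  proof (intro sum_mono)
    fix z
    show "(\<Prod>t\<in>{..d}. x t z) \<le> (\<Sum>t\<in>{..d}. x t z ^ ?m / ?m)"
      using amgm[of "{..d}" "\<lambda>t. x t z"] by (simp add: x_def)
  qed
  also have "\<dots> = (\<Sum>t\<in>{..d}. (\<Sum>z<2^n. dec g n (sg n Us t z) ^ (2 * ?m)) / ?m)"
  proof -
    have xp: "x t z ^ ?m = dec g n (sg n Us t z) ^ (2 * ?m)" for t z unfolding x_def by (simp only: power_mult)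
    show ?thesis by (subst sum.swap) (simp only: xp sum_divide_distrib)
  qed
  also have "\<dots> \<le> (\<Sum>t\<in>{..d}. (\<Sum>s\<in>SS n. dec g n s ^ (2 * ?m)) / ?m)"
  proof (intro sum_mono divide_right_mono)
    fix t assume t: "t \<in> {..d}"
    have P: "\<forall>z. sg n Us t z \<in> SS n" "inj_on (sg n Us t) {..<2^n}"
      using sg_props[OF cl, of t] t by auto
    have "(\<Sum>z<2^n. dec g n (sg n Us t z) ^ (2 * ?m)) = (\<Sum>s\<in>sg n Us t ` {..<2^n}. dec g n s ^ (2 * ?m))"
      using sum.reindex[OF P(2), of "\<lambda>s. dec g n s ^ (2 * ?m)"] by simp
    also have "\<dots> \<le> (\<Sum>s\<in>SS n. dec g n s ^ (2 * ?m))"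
    proof -
      have sub: "sg n Us t ` {..<2^n} \<subseteq> SS n" using P(1) by auto
      show ?thesis by (rule sum_mono2, rule finite_SS, rule sub, rule zero_le_power, rule dec_nonneg, rule g(2))
    qed
    finally show "(\<Sum>z<2^n. dec g n (sg n Us t z) ^ (2 * ?m)) \<le> (\<Sum>s\<in>SS n. dec g n s ^ (2 * ?m))" .
  qed simp
  also have "\<dots> = (1 + 3 * (1 - g) ^ (2 * ?m)) ^ n"
    using sum_dec_pow[OF g(2), of n "2 * ?m"] by simp
  finally show ?thesis .
qed

lemma final_num:
  fixes n d :: nat and g :: real
  assumes n: "1 \<le> n" and g: "0 < g" "g \<le> 1" and d: "ln (real n) / g \<le> real d"
  shows "(1 + 3 * (1 - g) ^ (2 * Suc d)) ^ n \<le> exp 3"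
proof -
  have "(1 - g) ^ (2 * Suc d) \<le> (1 - g) ^ d"
    by (rule power_decreasing) (use g in auto)
  also have "(1 - g) ^ d \<le> exp (- g) ^ d"
    by (rule power_mono) (use g exp_ge_add_one_self[of "-g"] in auto)
  also have "\<dots> = exp (- (g * real d))" by (simp add: exp_of_nat_mult[symmetric] mult.commute)
  also have "\<dots> \<le> exp (- ln (real n))"
  proof -
    have "ln (real n) \<le> g * real d" using d g by (simp add: divide_le_eq mult.commute)
    then show ?thesis by simp
  qed
  also have "\<dots> = 1 / real n" using n by (simp add: exp_minus inverse_eq_divide)
  finally have e: "(1 - g) ^ (2 * Suc d) \<le> 1 / real n" .
  have "(1 + 3 * (1 - g) ^ (2 * Suc d)) ^ n \<le> (1 + 3 / real n) ^ n"
    by (rule power_mono) (use e g in auto)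
  also have "\<dots> \<le> exp (3 / real n) ^ n"
    by (rule power_mono) (use exp_ge_add_one_self[of "3 / real n"] in auto)
  also have "\<dots> = exp 3" using n by (simp add: exp_of_nat_mult[symmetric])
  finally show ?thesis .
qed

lemma main_bound:
  fixes n d :: nat and g :: real
  assumes n: "1 \<le> n" and g: "0 < g \<and> g \<le> 1" and d: "real d \<ge> 1 * ln (real n) / g"
    and cl: "\<forall>t<d. clifford n (Us t)" and U: "unitary_op (2 ^ n) U"
  shows "(1 / 2 ^ n) * (\<Sum>y<2 ^ n. \<Sum>x<2 ^ n. (out_prob g n Us d U y x)\<^sup>2) \<le> exp 3 / 2 ^ n"
proof -
  have "(\<Sum>y<2 ^ n. \<Sum>x<2 ^ n. (out_prob g n Us d U y x)\<^sup>2) \<le> (\<Sum>y<(2::nat) ^ n. (\<Sum>z<2^n. (bt g n Us d z)\<^sup>2) / 2^n)"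
    by (intro sum_mono per_y[OF cl _ U]) (use g in auto)
  also have "\<dots> = (\<Sum>z<2^n. (bt g n Us d z)\<^sup>2)" by simp
  also have "\<dots> \<le> (1 + 3 * (1 - g) ^ (2 * Suc d)) ^ n"
    by (rule total_bound[OF cl]) (use g in auto)
  also have "\<dots> \<le> exp 3" by (rule final_num) (use n g d in auto)
  finally have "(\<Sum>y<2 ^ n. \<Sum>x<2 ^ n. (out_prob g n Us d U y x)\<^sup>2) \<le> exp 3" .
  then show ?thesis by (simp add: divide_right_mono)
qed

theorem theorem5:
  "\<exists>c K :: real. \<forall>n \<ge> 1. \<forall>\<gamma>. 0 < \<gamma> \<and> \<gamma> \<le> 1 \<longrightarrow>
     (\<forall>d Us U. real d \<ge> c * ln (real n) / \<gamma> \<longrightarrow>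
        (\<forall>t<d. clifford n (Us t)) \<longrightarrow> unitary_op (2 ^ n) U \<longrightarrow>
        (1 / 2 ^ n) * (\<Sum>y<2 ^ n. \<Sum>x<2 ^ n. (out_prob \<gamma> n Us d U y x)\<^sup>2) \<le> K / 2 ^ n)"
  using main_bound by blast

end
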